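(* Let $\beta\in\mathbb R$ with $|\beta|<\frac\pi4$, let $a_0,a_1,a_2,a_3$ be given by $a_0=\frac{1+\sqrt2\cos\beta}{2\sqrt2}$, $a_1=\frac{1+\sqrt2\sin\beta}{2\sqrt2}$, $a_2=\frac{1-\sqrt2\cos\beta}{2\sqrt2}$, $a_3=\frac{1-\sqrt2\sin\beta}{2\sqrt2}$, and let $\mu_0$ be the associated measure. If $\mu_0$ is absolutely continuous with respect to Lebesgue measure on $[0,1]$, then its Radon–Nikodym derivative $f=d\mu_0/dx$ is not essentially bounded on any non-empty open subset of $[0,1]$.
   Context: $L^2(\mathbb T)$ with normalized Haar measure, $\langle f\mid g\rangle=\int\overline fg$, $e_n(z)=z^n$. $m_0(z)=a_0+a_1z+a_2z^2+a_3z^3$, $m_1(z)=z^3\overline{m_0(-z)}$, $(S_if)(z)=m_i(z)f(z^2)$ for $i=0,1$. $\mu_0$ is the Borel probability measure on $[0,1]$ determined by $\mu_0([\xi,\xi+2^{-k}))=\|S_{i_k}^*\cdots S_{i_1}^*e_0\|^2$ for every $\xi=\sum_{r=1}^ki_r2^{-r}$, $i_r\in\{0,1\}$. *)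

theory Defs
  imports "HOL-Probability.Probability"
begin

text \<open>The circle T is parametrised by t in [0,1] via t |-> exp(2 pi i t); normalized Haar
measure on T corresponds to Lebesgue measure on [0,1]. Elements of L^2(T) are represented by
Borel measurable functions complex => complex (only their values on T matter).\<close>

definition circ :: "real \<Rightarrow> complex" where
  "circ t = cis (2 * pi * t)"

definition ipT :: "(complex \<Rightarrow> complex) \<Rightarrow> (complex \<Rightarrow> complex) \<Rightarrow> complex" where
  "ipT f g = set_lebesgue_integral lborel {0..1::real} (\<lambda>t. cnj (f (circ t)) * g (circ t))"

definition l2sqT :: "(complex \<Rightarrow> complex) \<Rightarrow> ennreal" where
  "l2sqT f = (\<integral>\<^sup>+ t. ennreal ((cmod (f (circ t)))\<^sup>2) * indicator {0..1::real} t \<partial>lborel)"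

definition e0 :: "complex \<Rightarrow> complex" where
  "e0 z = 1"

definition m0 :: "(nat \<Rightarrow> complex) \<Rightarrow> complex \<Rightarrow> complex" where
  "m0 a z = a 0 + a 1 * z + a 2 * z ^ 2 + a 3 * z ^ 3"

definition m1 :: "(nat \<Rightarrow> complex) \<Rightarrow> complex \<Rightarrow> complex" where
  "m1 a z = z ^ 3 * cnj (m0 a (- z))"

definition Sop :: "(nat \<Rightarrow> complex) \<Rightarrow> bool \<Rightarrow> (complex \<Rightarrow> complex) \<Rightarrow> complex \<Rightarrow> complex" where
  "Sop a i f z = (if i then m1 a z else m0 a z) * f (z ^ 2)"

fun Sprod :: "(nat \<Rightarrow> complex) \<Rightarrow> bool list \<Rightarrow> (complex \<Rightarrow> complex) \<Rightarrow> complex \<Rightarrow> complex" where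
  "Sprod a [] h = h"
| "Sprod a (i # is) h = Sop a i (Sprod a is h)"

text \<open>Norm of S_{i_k}^* ... S_{i_1}^* e_0 = (S_{i_1} ... S_{i_k})^* e_0, computed by duality:
  the norm of T^* x equals the supremum of |<x | T h>| over h in the unit ball of L^2(T).\<close>
definition adj_norm :: "(nat \<Rightarrow> complex) \<Rightarrow> bool list \<Rightarrow> real" where
  "adj_norm a is = (SUP h \<in> {h. h \<in> borel_measurable borel \<and> l2sqT h \<le> 1}.
                       cmod (ipT e0 (Sprod a is h)))"

definition dyadic :: "bool list \<Rightarrow> real" where
  "dyadic is = (\<Sum>r<length is. (if is ! r then 1 else 0) / 2 ^ (r + 1))"

definition coeffs_beta :: "real \<Rightarrow> nat \<Rightarrow> complex" where
  "coeffs_beta \<beta> k = complex_of_real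
     (if k = 0 then (1 + sqrt 2 * cos \<beta>) / (2 * sqrt 2)
      else if k = 1 then (1 + sqrt 2 * sin \<beta>) / (2 * sqrt 2)
      else if k = 2 then (1 - sqrt 2 * cos \<beta>) / (2 * sqrt 2)
      else if k = 3 then (1 - sqrt 2 * sin \<beta>) / (2 * sqrt 2)
      else 0)"

text \<open>mu is the measure mu_0 associated with the coefficients a: a Borel probability measure
  on [0,1] (viewed as a measure on the real line concentrated on [0,1]).\<close>
definition is_mu0 :: "(nat \<Rightarrow> complex) \<Rightarrow> real measure \<Rightarrow> bool" where
  "is_mu0 a \<mu> \<longleftrightarrow> sets \<mu> = sets borel \<and> prob_space \<mu> \<and> emeasure \<mu> (- {0..1}) = 0 \<and>
     (\<forall>is. emeasure \<mu> {dyadic is ..< dyadic is + 1 / 2 ^ length is}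
             = ennreal ((adj_norm a is)\<^sup>2))"

end

theory Submission
  imports Defs "HOL-Computational_Algebra.Polynomial"
begin

lemma circ_pow: "circ t ^ n = exp (complex_of_real (2 * pi * real n) * \<i> * complex_of_real t)"
  unfolding circ_def cis_conv_exp exp_of_nat_mult[symmetric] by (simp add: algebra_simps)

lemma circ_cont: "continuous_on S (\<lambda>t. f (circ t))" if "continuous_on UNIV f"
  unfolding circ_def by (intro continuous_on_compose2[OF that] continuous_intros) auto

lemma set_integrable_cont01:
  fixes f :: "real \<Rightarrow> complex"
  assumes "continuous_on {0..1} f"
  shows "set_integrable lborel {0..1} f"
  unfolding set_integrable_def using borel_integrable_compact[OF compact_Icc assms] .

lemma int_circ_pow: "(CLBINT t:{0..1}. circ t ^ n) = (if n = 0 then 1 else 0)"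
proof (cases "n = 0")
  case True
  then show ?thesis by (simp add: set_integral_const)
next
  case False
  define c where "c = complex_of_real (2 * pi * real n) * \<i>"
  have c0: "c \<noteq> 0" using False by (simp add: c_def)
  have cont: "continuous_on {0..1} (\<lambda>t. circ t ^ n)"
    unfolding circ_def by (intro continuous_intros)
  have si: "set_integrable lborel {0..1} (\<lambda>t. circ t ^ n)"
    by (rule set_integrable_cont01[OF cont])
  have der: "((\<lambda>t. exp (c * complex_of_real t) / c) has_vector_derivative exp (c * complex_of_real t)) (at t within {0..1})" for t
  proof -
    have "((\<lambda>z. exp (c * z) / c) has_field_derivative exp (c * complex_of_real t)) (at (complex_of_real t))"
      using c0 by (auto intro!: derivative_eq_intros)
    from has_vector_derivative_real_field[OF this] show ?thesis .
  qed
  have "((\<lambda>t. exp (c * complex_of_real t)) has_integral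
      (exp (c * complex_of_real 1) / c - exp (c * complex_of_real 0) / c)) {0..1}"
    by (rule fundamental_theorem_of_calculus) (auto intro: der)
  moreover have "exp (c * complex_of_real 1) = 1"
    unfolding c_def by (auto simp: exp_eq_1 intro!: exI[of _ "int n"])
  ultimately have hi: "((\<lambda>t. circ t ^ n) has_integral 0) {0..1}"
    by (simp add: circ_pow c_def)
  show ?thesis using set_borel_integral_eq_integral(2)[OF si] hi False
    by (simp add: integral_unique)
qed

lemma int_poly_circ: "(CLBINT t:{0..1}. poly p (circ t)) = poly p 0"
proof -
  have ii: "integrable lborel (\<lambda>t. indicator {0..1} t *\<^sub>R (coeff p i * circ t ^ i))" for i
  proof -
    have "continuous_on {0..1} (\<lambda>t. coeff p i * circ t ^ i)"
      unfolding circ_def by (intro continuous_intros)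
    from set_integrable_cont01[OF this] show ?thesis unfolding set_integrable_def .
  qed
  have "(CLBINT t:{0..1}. poly p (circ t))
      = integral\<^sup>L lborel (\<lambda>t. \<Sum>i\<le>degree p. indicator {0..1} t *\<^sub>R (coeff p i * circ t ^ i))"
    unfolding set_lebesgue_integral_def poly_altdef scaleR_sum_right ..
  also have "\<dots> = (\<Sum>i\<le>degree p. CLBINT t:{0..1}. coeff p i * circ t ^ i)"
    unfolding set_lebesgue_integral_def by (rule Bochner_Integration.integral_sum) (rule ii)
  also have "\<dots> = (\<Sum>i\<le>degree p. coeff p i * (if i = 0 then 1 else 0))"
    by (simp only: set_integral_mult_right int_circ_pow)
  also have "\<dots> = coeff p 0" by (simp add: sum.delta' mult_ac if_distrib cong: if_cong)
  finally show ?thesis by (simp add: poly_0_coeff_0)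
qed

definition Mp :: "(nat \<Rightarrow> complex) \<Rightarrow> bool \<Rightarrow> complex poly" where
  "Mp a i = (if i then [:- a 3, a 2, - a 1, a 0:] else [:a 0, a 1, a 2, a 3:])"

fun Pw :: "(nat \<Rightarrow> complex) \<Rightarrow> bool list \<Rightarrow> complex poly" where
  "Pw a [] = 1"
| "Pw a (i # w) = Mp a i * pcompose (Pw a w) [:0, 0, 1:]"

lemma m_circ:
  assumes r: "\<And>k. cnj (a k) = a k" and z: "cmod z = 1"
  shows "(if i then m1 a z else m0 a z) = poly (Mp a i) z"
proof -
  have z0: "z \<noteq> 0" using z by auto
  have "z * cnj z = 1" using z complex_norm_square[of z] by simp
  then have zc: "cnj z = inverse z" using z0 by (simp add: field_simps)
  show ?thesis
    unfolding m1_def m0_def Mp_def using z0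
    by (auto simp: r zc field_simps power2_eq_square power3_eq_cube)
qed

lemma Sprod_e0_poly:
  assumes r: "\<And>k. cnj (a k) = a k"
  shows "cmod z = 1 \<Longrightarrow> Sprod a w e0 z = poly (Pw a w) z"
proof (induction w arbitrary: z)
  case Nil
  then show ?case by (simp add: e0_def)
next
  case (Cons i w)
  have "cmod (z ^ 2) = 1" using Cons.prems by (simp add: norm_power)
  then show ?case using Cons m_circ[OF r Cons.prems, of i]
    by (simp add: Sop_def poly_pcompose power2_eq_square)
qed

lemma Pw_0: "poly (Pw a w) 0 = prod_list (map (\<lambda>i. if i then - a 3 else a 0) w)"
  by (induction w) (auto simp: poly_pcompose Mp_def)

lemma circ_meas[measurable]: "circ \<in> borel_measurable borel"
  unfolding circ_def by (intro borel_measurable_continuous_onI continuous_intros)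

lemma circ_periodic: "circ (1 + x) = circ x"
  unfolding circ_def by (simp add: distrib_left cis_mult[symmetric])

lemma circ_sq: "circ t ^ 2 = circ (2 * t)"
  unfolding circ_def power2_eq_square cis_mult by (simp add: algebra_simps)

lemma double_le:
  fixes G :: "complex \<Rightarrow> ennreal"
  assumes [measurable]: "G \<in> borel_measurable borel"
  shows "(\<integral>\<^sup>+t. G (circ (2*t)) * indicator {0..1} t \<partial>lborel) \<le> (\<integral>\<^sup>+t. G (circ t) * indicator {0..1} t \<partial>lborel)"
proof -
  define X where "X = (\<integral>\<^sup>+t. G (circ t) * indicator {0..1} t \<partial>lborel)"
  define Y where "Y = (\<integral>\<^sup>+t. G (circ (2*t)) * indicator {0..1} t \<partial>lborel)"
  have "(\<integral>\<^sup>+s. G (circ s) * indicator {0..2} s \<partial>lborel)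
      = ennreal \<bar>2\<bar> * (\<integral>\<^sup>+x. G (circ (0 + 2 * x)) * indicator {0..2} (0 + 2 * x) \<partial>lborel)"
    by (rule nn_integral_real_affine) auto
  also have "(\<lambda>x. G (circ (0 + 2 * x)) * indicator {0..2::real} (0 + 2 * x)) = (\<lambda>x. G (circ (2*x)) * indicator {0..1} x)"
    by (auto simp: indicator_def fun_eq_iff)
  finally have e1: "(\<integral>\<^sup>+s. G (circ s) * indicator {0..2} s \<partial>lborel) = 2 * Y" by (simp add: Y_def)
  have "(\<integral>\<^sup>+s. G (circ s) * indicator {1..2} s \<partial>lborel)
      = ennreal \<bar>1\<bar> * (\<integral>\<^sup>+x. G (circ (1 + 1 * x)) * indicator {1..2} (1 + 1 * x) \<partial>lborel)"
    by (rule nn_integral_real_affine) auto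
  also have "(\<lambda>x. G (circ (1 + 1 * x)) * indicator {1..2::real} (1 + 1 * x)) = (\<lambda>x. G (circ x) * indicator {0..1} x)"
    by (auto simp: indicator_def fun_eq_iff circ_periodic)
  finally have e2: "(\<integral>\<^sup>+s. G (circ s) * indicator {1..2} s \<partial>lborel) = X" by (simp add: X_def)
  have "(\<integral>\<^sup>+s. G (circ s) * indicator {0..2} s \<partial>lborel)
     \<le> (\<integral>\<^sup>+s. G (circ s) * indicator {0..1} s + G (circ s) * indicator {1..2} s \<partial>lborel)"
    by (intro nn_integral_mono) (auto simp: indicator_def)
  also have "\<dots> = X + X"
    using e2 by (subst nn_integral_add) (simp_all add: X_def)
  finally have "2 * Y \<le> 2 * X" using e1 by (simp add: mult_2)
  then show ?thesis unfolding X_def Y_def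
    by (simp add: ennreal_mult_le_mult_iff)
qed

lemma pow_le:
  fixes G :: "complex \<Rightarrow> ennreal"
  assumes "G \<in> borel_measurable borel"
  shows "(\<integral>\<^sup>+t. G (circ t ^ (2^k)) * indicator {0..1} t \<partial>lborel) \<le> (\<integral>\<^sup>+t. G (circ t) * indicator {0..1} t \<partial>lborel)"
  using assms
proof (induction k arbitrary: G)
  case 0
  then show ?case by simp
next
  case (Suc k)
  note [measurable] = Suc.prems
  have m2[measurable]: "(\<lambda>z. G (z ^ 2)) \<in> borel_measurable borel" by measurable
  have "(\<lambda>t. G (circ t ^ (2^Suc k)) * indicator {0..1} t) = (\<lambda>t. G ((circ t ^ (2^k))^2) * indicator {0..1::real} t)"
    by (simp add: power_mult[symmetric] mult.commute)
  then have "(\<integral>\<^sup>+t. G (circ t ^ (2^Suc k)) * indicator {0..1} t \<partial>lborel)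
     = (\<integral>\<^sup>+t. G ((circ t ^ (2^k))^2) * indicator {0..1} t \<partial>lborel)" by simp
  also have "\<dots> \<le> (\<integral>\<^sup>+t. G (circ t ^ 2) * indicator {0..1} t \<partial>lborel)"
    using Suc.IH[OF m2] .
  also have "\<dots> = (\<integral>\<^sup>+t. G (circ (2*t)) * indicator {0..1} t \<partial>lborel)"
    by (simp add: circ_sq)
  also have "\<dots> \<le> (\<integral>\<^sup>+t. G (circ t) * indicator {0..1} t \<partial>lborel)"
    by (rule double_le) simp
  finally show ?case .
qed

lemma Sprod_split: "Sprod a w h z = Sprod a w e0 z * h (z ^ (2 ^ length w))"
proof (induction w arbitrary: z)
  case Nil
  then show ?case by (simp add: e0_def)
next
  case (Cons i w)
  then show ?case by (simp add: Sop_def power_mult[symmetric] mult_ac)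
qed

definition Bd :: "(nat \<Rightarrow> complex) \<Rightarrow> real" where
  "Bd a = cmod (a 0) + cmod (a 1) + cmod (a 2) + cmod (a 3)"

lemma Bd_nonneg: "0 \<le> Bd a" unfolding Bd_def by simp

lemma m0_bound: "cmod z = 1 \<Longrightarrow> cmod (m0 a z) \<le> Bd a"
proof -
  assume z: "cmod z = 1"
  have t: "\<And>x y u v::complex. cmod (x+y+u+v) \<le> cmod x + cmod y + cmod u + cmod v"
    by (smt (verit) norm_triangle_ineq)
  show ?thesis using t[of "a 0" "a 1 * z" "a 2 * z^2" "a 3 * z^3"] z
    by (simp add: m0_def Bd_def norm_mult norm_power)
qed

lemma m_bound: "cmod z = 1 \<Longrightarrow> cmod (if i then m1 a z else m0 a z) \<le> Bd a"
  using m0_bound[of z a] m0_bound[of "-z" a]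
  by (auto simp: m1_def norm_mult norm_power)

lemma Sprod_bound: "cmod z = 1 \<Longrightarrow> cmod (Sprod a w e0 z) \<le> Bd a ^ length w"
proof (induction w arbitrary: z)
  case Nil
  then show ?case by (simp add: e0_def)
next
  case (Cons i w)
  have z2: "cmod (z^2) = 1" using Cons.prems by (simp add: norm_power)
  have "cmod (Sprod a (i # w) e0 z) = cmod (if i then m1 a z else m0 a z) * cmod (Sprod a w e0 (z^2))"
    by (simp add: Sop_def norm_mult)
  also have "\<dots> \<le> Bd a * Bd a ^ length w"
    by (intro mult_mono m_bound Cons.prems Cons.IH z2 Bd_nonneg) simp_all
  finally show ?case by simp
qed

lemma m0_meas[measurable]: "m0 a \<in> borel_measurable borel"
  unfolding m0_def by measurable

lemma m1_meas[measurable]: "m1 a \<in> borel_measurable borel"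
  unfolding m1_def m0_def by (intro borel_measurable_continuous_onI continuous_intros)

lemma Sprod_meas[measurable]: "h \<in> borel_measurable borel \<Longrightarrow> Sprod a w h \<in> borel_measurable borel"
proof (induction w)
  case Nil
  then show ?case by simp
next
  case (Cons i w)
  note [measurable] = Cons.IH[OF Cons.prems]
  show ?case unfolding Sprod.simps Sop_def[abs_def] by measurable
qed

lemma e0_meas[measurable]: "e0 \<in> borel_measurable borel"
  unfolding e0_def by simp

lemma ip_bound:
  assumes hm[measurable]: "h \<in> borel_measurable borel" and hl: "l2sqT h \<le> 1"
  shows "cmod (ipT e0 (Sprod a w h)) \<le> 2 * Bd a ^ length w"
proof -
  define k where "k = length w"
  define f where "f t = indicator {0..1} t *\<^sub>R (Sprod a w e0 (circ t) * h (circ t ^ (2^k)))" for t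
  have ipf: "ipT e0 (Sprod a w h) = integral\<^sup>L lborel f"
    unfolding ipT_def set_lebesgue_integral_def f_def k_def
    by (simp add: e0_def Sprod_split[of a w h])
  have Bk: "0 \<le> Bd a ^ k" using Bd_nonneg by simp
  show ?thesis
  proof (cases "integrable lborel f")
    case False
    then show ?thesis using ipf Bk by (simp add: not_integrable_integral_eq k_def)
  next
    case True
    have "ennreal (cmod (integral\<^sup>L lborel f)) \<le> (\<integral>\<^sup>+t. ennreal (norm (f t)) \<partial>lborel)"
      by (rule integral_norm_bound_ennreal[OF True])
    also have "\<dots> \<le> (\<integral>\<^sup>+t. ennreal (Bd a ^ k) * (ennreal (indicator {0..1} t)
         + ennreal ((cmod (h (circ t ^ (2^k))))\<^sup>2) * indicator {0..1} t) \<partial>lborel)"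
    proof (intro nn_integral_mono)
      fix t
      have c: "cmod (circ t) = 1" by (simp add: circ_def)
      have sb: "cmod (Sprod a w e0 (circ t)) \<le> Bd a ^ k" using Sprod_bound[OF c] by (simp add: k_def)
      have hh: "cmod (h (circ t ^ (2^k))) \<le> 1 + (cmod (h (circ t ^ (2^k))))\<^sup>2"
      proof -
        define x where "x = cmod (h (circ t ^ (2^k)))"
        have "0 \<le> (x - 1/2)^2" by simp
        moreover have "(x - 1/2)^2 = x^2 - x + 1/4" by (simp add: power2_eq_square algebra_simps)
        ultimately show ?thesis unfolding x_def[symmetric] by linarith
      qed
      have "norm (f t) \<le> Bd a ^ k * (indicator {0..1} t + (cmod (h (circ t ^ (2^k))))\<^sup>2 * indicator {0..1} t)"
      proof (cases "t \<in> {0..1}")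
        case True
        have "norm (f t) = cmod (Sprod a w e0 (circ t)) * cmod (h (circ t ^ (2^k)))"
          using True by (simp add: f_def norm_mult)
        also have "\<dots> \<le> Bd a ^ k * (1 + (cmod (h (circ t ^ (2^k))))\<^sup>2)"
          by (intro mult_mono sb hh Bk) simp_all
        finally show ?thesis using True by simp
      next
        case False
        then show ?thesis by (simp add: f_def)
      qed
      then have "ennreal (norm (f t)) \<le> ennreal (Bd a ^ k * (indicator {0..1} t + (cmod (h (circ t ^ (2^k))))\<^sup>2 * indicator {0..1} t))"
        by (rule ennreal_leI)
      also have "\<dots> = ennreal (Bd a ^ k) * (ennreal (indicator {0..1} t)
         + ennreal ((cmod (h (circ t ^ (2^k))))\<^sup>2) * indicator {0..1} t)"
        using Bk by (cases "t \<in> {0..1}") (simp_all add: ennreal_mult ennreal_plus)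
      finally show "ennreal (norm (f t)) \<le> ennreal (Bd a ^ k) * (ennreal (indicator {0..1} t)
         + ennreal ((cmod (h (circ t ^ (2^k))))\<^sup>2) * indicator {0..1} t)" .
    qed
    also have "\<dots> = ennreal (Bd a ^ k) * (\<integral>\<^sup>+t. ennreal (indicator {0..1::real} t)
         + ennreal ((cmod (h (circ t ^ (2^k))))\<^sup>2) * indicator {0..1} t \<partial>lborel)"
      by (rule nn_integral_cmult) measurable
    also have "\<dots> = ennreal (Bd a ^ k) * ((\<integral>\<^sup>+t. ennreal (indicator {0..1::real} t) \<partial>lborel)
         + (\<integral>\<^sup>+t. ennreal ((cmod (h (circ t ^ (2^k))))\<^sup>2) * indicator {0..1} t \<partial>lborel))"
      apply (subst nn_integral_add)
        apply (simp add: ennreal_indicator)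
       apply measurable
      done
    also have "\<dots> \<le> ennreal (Bd a ^ k) * (1 + 1)"
    proof (intro mult_left_mono add_mono)
      show "(\<integral>\<^sup>+t. ennreal (indicator {0..1::real} t) \<partial>lborel) \<le> 1" by (simp add: ennreal_indicator)
      have "(\<integral>\<^sup>+t. ennreal ((cmod (h (circ t ^ (2^k))))\<^sup>2) * indicator {0..1} t \<partial>lborel) \<le> l2sqT h"
        unfolding l2sqT_def by (rule pow_le[where G="\<lambda>z. ennreal ((cmod (h z))\<^sup>2)"]) measurable
      then show "(\<integral>\<^sup>+t. ennreal ((cmod (h (circ t ^ (2^k))))\<^sup>2) * indicator {0..1} t \<partial>lborel) \<le> 1"
        using hl by simp
    qed simp
    also have "\<dots> = ennreal (2 * Bd a ^ k)"
      using Bk by (simp add: ennreal_mult' mult.commute)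
    finally show ?thesis using ipf Bk by (simp add: k_def ennreal_le_iff)
  qed
qed


lemma adj_lower:
  assumes r: "\<And>k. cnj (a k) = a k"
  shows "cmod (prod_list (map (\<lambda>i. if i then - a 3 else a 0) w)) \<le> adj_norm a w"
proof -
  define S where "S = {h. h \<in> borel_measurable borel \<and> l2sqT h \<le> 1}"
  have "l2sqT e0 = 1"
    unfolding l2sqT_def e0_def by (simp add: ennreal_indicator)
  then have e0S: "e0 \<in> S" unfolding S_def by simp
  have bdd: "bdd_above ((\<lambda>h. cmod (ipT e0 (Sprod a w h))) ` S)"
    by (rule bdd_aboveI2[where M="2 * Bd a ^ length w"]) (auto simp: S_def intro: ip_bound)
  have "ipT e0 (Sprod a w e0) = (CLBINT t:{0..1}. poly (Pw a w) (circ t))"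
    unfolding ipT_def
    by (rule set_lebesgue_integral_cong) (auto simp: e0_def circ_def Sprod_e0_poly[OF r])
  also have "\<dots> = prod_list (map (\<lambda>i. if i then - a 3 else a 0) w)"
    by (simp add: int_poly_circ Pw_0)
  finally have "cmod (prod_list (map (\<lambda>i. if i then - a 3 else a 0) w)) = cmod (ipT e0 (Sprod a w e0))" by simp
  also have "\<dots> \<le> adj_norm a w"
    unfolding adj_norm_def S_def[symmetric] by (rule cSUP_upper[OF e0S bdd])
  finally show ?thesis .
qed

fun bits :: "nat \<Rightarrow> nat \<Rightarrow> bool list" where
  "bits 0 m = []"
| "bits (Suc k) m = bits k (m div 2) @ [odd m]"

lemma length_bits[simp]: "length (bits k m) = k"
  by (induction k arbitrary: m) auto

lemma dyadic_snoc: "dyadic (w @ [b]) = dyadic w + (if b then 1 else 0) / 2 ^ (length w + 1)"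
  unfolding dyadic_def by (simp add: nth_append)

lemma dyadic_bits: "m < 2 ^ k \<Longrightarrow> dyadic (bits k m) = real m / 2 ^ k"
proof (induction k arbitrary: m)
  case 0
  then show ?case by (simp add: dyadic_def)
next
  case (Suc k)
  have "m div 2 < 2 ^ k" using Suc.prems by auto
  note ih = Suc.IH[OF this]
  have md: "real m = 2 * real (m div 2) + real (m mod 2)"
    by (metis of_nat_add of_nat_mult of_nat_numeral div_mult_mod_eq mult.commute)
  have "real (m mod 2) = (if odd m then 1 else 0)"
    by (simp add: odd_iff_mod_2_eq_one)
  then show ?case using ih md
    by (simp add: dyadic_snoc field_simps)
qed

lemma bits_shift: "bits (k + n) (m * 2 ^ n) = bits k m @ replicate n False"
proof (induction n)
  case 0
  then show ?case by simp
next
  case (Suc n)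
  have "bits (k + Suc n) (m * 2 ^ Suc n) = bits (k + n) (m * 2 ^ n) @ [False]"
    by simp
  then show ?case using Suc by (simp add: replicate_append_same[symmetric])
qed


theorem corollary3p13:
  fixes \<beta> :: real and \<mu> :: "real measure"
  assumes "\<bar>\<beta>\<bar> < pi / 4"
    and "is_mu0 (coeffs_beta \<beta>) \<mu>"
    and "absolutely_continuous lborel \<mu>"
  shows "\<forall>U. openin (top_of_set {0..1::real}) U \<and> U \<noteq> {} \<longrightarrow>
           \<not> (\<exists>C::real. AE x in lborel. x \<in> U \<longrightarrow> RN_deriv lborel \<mu> x \<le> ennreal C)"
proof (intro allI impI notI)
  fix U assume U: "openin (top_of_set {0..1::real}) U \<and> U \<noteq> {}"
  assume "\<exists>C::real. AE x in lborel. x \<in> U \<longrightarrow> RN_deriv lborel \<mu> x \<le> ennreal C"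
  then obtain C0 :: real where AEC0: "AE x in lborel. x \<in> U \<longrightarrow> RN_deriv lborel \<mu> x \<le> ennreal C0" by blast
  define C where "C = max C0 0"
  have C0: "0 \<le> C" by (simp add: C_def)
  have AEC: "AE x in lborel. x \<in> U \<longrightarrow> RN_deriv lborel \<mu> x \<le> ennreal C"
    using AEC0 by eventually_elim (auto simp: C_def intro: order_trans ennreal_leI)
  define a where "a = coeffs_beta \<beta>"
  define A0 where "A0 = (1 + sqrt 2 * cos \<beta>) / (2 * sqrt 2)"
  define A3 where "A3 = (1 - sqrt 2 * sin \<beta>) / (2 * sqrt 2)"
  have r: "\<And>k. cnj (a k) = a k" by (simp add: a_def coeffs_beta_def)
  have a0: "a 0 = complex_of_real A0" by (simp add: a_def coeffs_beta_def A0_def)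
  have a3: "a 3 = complex_of_real A3" by (simp add: a_def coeffs_beta_def A3_def)
  have mu: "sets \<mu> = sets borel" "\<And>w. emeasure \<mu> {dyadic w ..< dyadic w + 1 / 2 ^ length w}
             = ennreal ((adj_norm a w)\<^sup>2)"
    using assms(2) unfolding is_mu0_def a_def by auto
  have dens: "density lborel (RN_deriv lborel \<mu>) = \<mu>"
    by (rule sigma_finite_measure.density_RN_deriv[OF sigma_finite_lborel assms(3)]) (simp add: mu(1))
  have s2: "sqrt 2 * sqrt 2 = (2::real)" by simp
  have s2p: "0 < sqrt (2::real)" by simp
  have "cos (pi/4) < cos \<bar>\<beta>\<bar>"
    by (rule cos_monotone_0_pi) (use assms(1) in auto)
  then have cb: "sqrt 2 / 2 < cos \<beta>" by (simp add: cos_45)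
  have "sin \<beta> < sin (pi/4)"
    by (rule sin_monotone_2pi) (use assms(1) in auto)
  then have sb: "sin \<beta> < sqrt 2 / 2" by (simp add: sin_45)
  have "1 < sqrt 2 * cos \<beta>"
    using mult_strict_left_mono[OF cb s2p] s2 by simp
  then have A0gt: "1 / sqrt 2 < A0" unfolding A0_def using s2p
    by (simp add: field_simps)
  have A0pos: "0 < A0" using A0gt s2p by (smt (verit) divide_pos_pos)
  have q: "1 < 2 * A0^2"
  proof -
    have "(1 / sqrt 2)^2 < A0^2"
      by (rule power_strict_mono[OF A0gt]) (use s2p in auto)
    then show ?thesis by (simp add: power_divide)
  qed
  have "sqrt 2 * sin \<beta> < 1"
    using mult_strict_left_mono[OF sb s2p] s2 by simp
  then have A3pos: "0 < A3" unfolding A3_def using s2p by (simp add: field_simps)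
  obtain x where xU: "x \<in> U" using U by blast
  have Usub: "U \<subseteq> {0..1}" and
    "\<forall>x\<in>U. \<exists>e>0. \<forall>x'\<in>{0..1}. dist x' x < e \<longrightarrow> x' \<in> U"
    using U unfolding openin_euclidean_subtopology_iff by auto
  then obtain e where e: "e > 0" "\<And>x'. x' \<in> {0..1} \<Longrightarrow> dist x' x < e \<Longrightarrow> x' \<in> U"
    using xU by blast
  have x01: "0 \<le> x" "x \<le> 1" using xU Usub by auto
  obtain k where k: "(1/2::real)^k < e" using real_arch_pow_inv[OF e(1), of "1/2"] by auto
  have k': "1 / 2 ^ k < e" using k by (simp add: power_one_over)
  define m where "m = min (nat \<lfloor>x * 2^k\<rfloor>) (2^k - 1)"
  have p2: "(0::real) < 2^k" by simp
  have mlt: "m < 2^k"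
  proof -
    have "m \<le> 2^k - 1" unfolding m_def by (rule min.cobounded2)
    moreover have "(0::nat) < 2^k" by simp
    ultimately show ?thesis by linarith
  qed
  have mle: "real m \<le> x * 2^k"
  proof -
    have "real m \<le> real (nat \<lfloor>x * 2^k\<rfloor>)" unfolding m_def by simp
    also have "\<dots> \<le> x * 2^k" using x01 by simp
    finally show ?thesis .
  qed
  have mge: "x * 2^k \<le> real m + 1"
  proof (cases "nat \<lfloor>x * 2^k\<rfloor> \<le> 2^k - 1")
    case True
    then have "m = nat \<lfloor>x * 2^k\<rfloor>" unfolding m_def by simp
    then show ?thesis using x01 by linarith
  next
    case False
    then have "m = 2^k - 1" unfolding m_def by simp
    then have "real m + 1 = 2^k" by (simp add: of_nat_diff)
    then show ?thesis using x01 p2 by simp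
  qed
  define \<xi> where "\<xi> = real m / 2^k"
  have Jsub: "{\<xi> ..< \<xi> + 1/2^k} \<subseteq> U"
  proof
    fix y assume y: "y \<in> {\<xi> ..< \<xi> + 1/2^k}"
    have "\<xi> \<le> x" "x \<le> \<xi> + 1/2^k" using mle mge p2 unfolding \<xi>_def
      by (simp_all add: field_simps)
    moreover have "0 \<le> \<xi>" unfolding \<xi>_def by simp
    moreover have "\<xi> + 1/2^k \<le> 1"
    proof -
      have "m + 1 \<le> 2^k" using mlt by simp
      then have "real (m + 1) \<le> real (2^k)" by (rule of_nat_mono)
      then have "real m + 1 \<le> 2^k" by simp
      then show ?thesis unfolding \<xi>_def using p2 by (simp add: field_simps)
    qed
    ultimately show "y \<in> U" using y k' by (intro e(2)) (auto simp: dist_real_def)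
  qed
  define K0 where "K0 = cmod (prod_list (map (\<lambda>i. if i then - a 3 else a 0) (bits k m)))"
  have K0pos: "0 < K0"
    unfolding K0_def using A0pos A3pos by (auto simp: prod_list_zero_iff a0 a3)
  have bound: "(K0 * A0^n)^2 * 2^(k+n) \<le> C" for n
  proof -
    define w where "w = bits (k + n) (m * 2^n)"
    have lw: "length w = k + n" by (simp add: w_def)
    have "m * 2^n < 2^(k+n)" using mlt by (simp add: power_add)
    then have dw: "dyadic w = \<xi>" unfolding w_def \<xi>_def
      by (simp add: dyadic_bits power_add)
    have lowb: "K0 * A0^n \<le> adj_norm a w"
      using adj_lower[of a w, OF r] A0pos
      by (simp add: w_def bits_shift K0_def a0 norm_mult norm_power)
    define I where "I = {\<xi> ..< \<xi> + 1 / 2^(k+n)}"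
    have hle: "1/2^(k+n) \<le> (1::real)/2^k"
      by (rule divide_left_mono) (simp_all add: power_increasing)
    have "I \<subseteq> {\<xi> ..< \<xi> + 1/2^k}" unfolding I_def using hle by auto
    with Jsub have IU: "I \<subseteq> U" by blast
    have "ennreal ((adj_norm a w)\<^sup>2) = emeasure \<mu> I"
      using mu(2)[of w] by (simp add: I_def dw lw)
    also have "\<dots> = (\<integral>\<^sup>+y. RN_deriv lborel \<mu> y * indicator I y \<partial>lborel)"
      by (subst dens[symmetric], rule emeasure_density) (auto simp: I_def)
    also have "\<dots> \<le> (\<integral>\<^sup>+y. ennreal C * indicator I y \<partial>lborel)"
    proof (rule nn_integral_mono_AE)
      show "AE y in lborel. RN_deriv lborel \<mu> y * indicator I y \<le> ennreal C * indicator I y"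
        using AEC
      proof eventually_elim
        case (elim y)
        then show ?case using IU by (cases "y \<in> I") auto
      qed
    qed
    also have "\<dots> = ennreal C * ennreal (1 / 2^(k+n))"
      by (subst nn_integral_cmult_indicator) (auto simp: I_def)
    also have "\<dots> = ennreal (C / 2^(k+n))"
      using C0 by (simp add: ennreal_mult[symmetric])
    finally have "(adj_norm a w)\<^sup>2 \<le> C / 2^(k+n)"
      using C0 by (simp add: ennreal_le_iff)
    moreover have "(K0 * A0^n)^2 \<le> (adj_norm a w)\<^sup>2"
      by (rule power_mono[OF lowb]) (use K0pos A0pos in simp)
    ultimately have "(K0 * A0^n)^2 \<le> C / 2^(k+n)" by linarith
    then show ?thesis by (simp add: field_simps)
  qed
  obtain n where n: "C / (K0^2 * 2^k) < (2 * A0^2)^n" using real_arch_pow[OF q] by blast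
  have "(K0 * A0^n)^2 * 2^(k+n) = (2 * A0^2)^n * (K0^2 * 2^k)"
    by (simp add: power_mult_distrib power_add power_mult[symmetric] mult_ac)
  with bound[of n] have "(2 * A0^2)^n * (K0^2 * 2^k) \<le> C" by simp
  moreover have "C < (2 * A0^2)^n * (K0^2 * 2^k)" using n K0pos
    by (simp add: divide_less_eq mult.commute)
  ultimately show False by simp
qed

end
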